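(* Let $X$ be a real Banach space, let $K\subset X$ be compact, let $\lambda_1,\dots,\lambda_m\in X^*$ with $\|\lambda_j\|_{X^*}=1$, and let $w\in\mathbb{R}^m$. Then $$\lim_{\varepsilon\to 0^+} R(K(w,\varepsilon))_X=R(K_w)_X .$$
   Context: For $g\in X$ write $\lambda(g):=(\lambda_1(g),\dots,\lambda_m(g))\in\mathbb{R}^m$. On $\mathbb{R}^m$ use the norm $\|v\|:=\big[\frac1m\sum_{j=1}^m|v_j|^2\big]^{1/2}$. For $w\in\mathbb{R}^m$, $K_w:=\{f\in K:\ \lambda(f)=w\}$, and for $\varepsilon>0$, $K(w,\varepsilon):=\bigcup_{w'\in\mathbb{R}^m:\ \|w'-w\|\le\varepsilon}K_{w'}$. For a set $S\subset X$, the Chebyshev radius is $R(S)_X:=\inf\{r:\ S\subset B(z,r)_X \text{ for some } z\in X\}$, where $B(z,r)_X$ is the closed ball in $X$ of center $z$ and radius $r$. *)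

theory Defs
  imports "HOL-Analysis.Analysis"
begin

text \<open>Normalized Euclidean norm on R^m, vectors represented as nat => real,
  only the coordinates j < m matter.\<close>
definition mnorm :: "nat \<Rightarrow> (nat \<Rightarrow> real) \<Rightarrow> real" where
  "mnorm m v = sqrt ((1 / real m) * (\<Sum>j<m. \<bar>v j\<bar>^2))"

definition fiber :: "'a set \<Rightarrow> nat \<Rightarrow> (nat \<Rightarrow> 'a \<Rightarrow> real) \<Rightarrow> (nat \<Rightarrow> real) \<Rightarrow> 'a set" where
  "fiber K m lam w = {f \<in> K. \<forall>j<m. lam j f = w j}"

definition fiber_nbhd :: "'a set \<Rightarrow> nat \<Rightarrow> (nat \<Rightarrow> 'a \<Rightarrow> real) \<Rightarrow> (nat \<Rightarrow> real) \<Rightarrow> real \<Rightarrow> 'a set" where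
  "fiber_nbhd K m lam w \<epsilon> =
     \<Union> {fiber K m lam w' | w'. mnorm m (\<lambda>j. w' j - w j) \<le> \<epsilon>}"

definition cheb_radius :: "'a::metric_space set \<Rightarrow> real" where
  "cheb_radius S = Inf {r. \<exists>z. S \<subseteq> cball z r}"

end

theory Submission
  imports Defs
begin

lemma cheb_mono:
  fixes S T :: "'a::metric_space set"
  assumes "S \<noteq> {}" "S \<subseteq> T" "bounded T"
  shows "cheb_radius S \<le> cheb_radius T"
proof -
  obtain z r where zr: "T \<subseteq> cball z r" using assms(3) bounded_subset_cball by blast
  obtain s where s: "s \<in> S" using assms(1) by blast
  have ne: "{r. \<exists>z. T \<subseteq> cball z r} \<noteq> {}" using zr by blast
  have bb: "bdd_below {r. \<exists>z. S \<subseteq> cball z r}"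
    unfolding bdd_below_def
  proof (intro exI[of _ 0] ballI)
    fix r assume "r \<in> {r. \<exists>z. S \<subseteq> cball z r}"
    then obtain z where "S \<subseteq> cball z r" by blast
    then have "dist z s \<le> r" using s by auto
    then show "0 \<le> r" using zero_le_dist[of z s] by linarith
  qed
  have sub: "{r. \<exists>z. T \<subseteq> cball z r} \<subseteq> {r. \<exists>z. S \<subseteq> cball z r}" using assms(2) by blast
  show ?thesis unfolding cheb_radius_def using cInf_superset_mono[OF ne bb sub] .
qed

lemma cheb_nbhd:
  fixes S T :: "'a::real_normed_vector set"
  assumes "S \<noteq> {}" "bounded S" "T \<noteq> {}" "T \<subseteq> (\<Union>x\<in>S. ball x d)"
  shows "cheb_radius T \<le> cheb_radius S + d"
proof -
  have ne: "{r. \<exists>z. S \<subseteq> cball z r} \<noteq> {}"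
    using assms(2) bounded_subset_cball by blast
  obtain t where t: "t \<in> T" using assms(3) by blast
  have bbT: "bdd_below {r. \<exists>z. T \<subseteq> cball z r}"
    unfolding bdd_below_def
  proof (intro exI[of _ 0] ballI)
    fix r assume "r \<in> {r. \<exists>z. T \<subseteq> cball z r}"
    then obtain z where "T \<subseteq> cball z r" by blast
    then have "dist z t \<le> r" using t by auto
    then show "0 \<le> r" using zero_le_dist[of z t] by linarith
  qed
  have "cheb_radius T - d \<le> Inf {r. \<exists>z. S \<subseteq> cball z r}"
  proof (rule cInf_greatest[OF ne])
    fix r assume "r \<in> {r. \<exists>z. S \<subseteq> cball z r}"
    then obtain z where z: "S \<subseteq> cball z r" by blast
    have "T \<subseteq> cball z (r + d)"
    proof
      fix y assume "y \<in> T"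
      then obtain x where x: "x \<in> S" "dist x y < d" using assms(4) by auto
      have "dist z x \<le> r" using z x(1) by auto
      then have "dist z y \<le> r + d" using dist_triangle[of z y x] x(2)
        by (simp add: dist_commute)
      then show "y \<in> cball z (r + d)" by simp
    qed
    then have "r + d \<in> {r. \<exists>z. T \<subseteq> cball z r}" by blast
    then have "cheb_radius T \<le> r + d" unfolding cheb_radius_def
      using cInf_lower[OF _ bbT] by blast
    then show "cheb_radius T - d \<le> r" by simp
  qed
  then show ?thesis unfolding cheb_radius_def by simp
qed

lemma nbhd_eq:
  "fiber_nbhd K m lam w e = {f\<in>K. mnorm m (\<lambda>j. lam j f - w j) \<le> e}"
proof
  show "fiber_nbhd K m lam w e \<subseteq> {f\<in>K. mnorm m (\<lambda>j. lam j f - w j) \<le> e}"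
  proof
    fix f assume "f \<in> fiber_nbhd K m lam w e"
    then obtain w' where w': "f \<in> fiber K m lam w'" "mnorm m (\<lambda>j. w' j - w j) \<le> e"
      unfolding fiber_nbhd_def by blast
    have "mnorm m (\<lambda>j. w' j - w j) = mnorm m (\<lambda>j. lam j f - w j)"
      unfolding mnorm_def using w'(1) unfolding fiber_def by (auto intro!: sum.cong)
    then show "f \<in> {f\<in>K. mnorm m (\<lambda>j. lam j f - w j) \<le> e}"
      using w' unfolding fiber_def by auto
  qed
next
  show "{f\<in>K. mnorm m (\<lambda>j. lam j f - w j) \<le> e} \<subseteq> fiber_nbhd K m lam w e"
  proof
    fix f assume f: "f \<in> {f\<in>K. mnorm m (\<lambda>j. lam j f - w j) \<le> e}"
    have "f \<in> fiber K m lam (\<lambda>j. lam j f)" using f unfolding fiber_def by auto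
    then show "f \<in> fiber_nbhd K m lam w e" unfolding fiber_nbhd_def using f by blast
  qed
qed

theorem lemma2p1:
  fixes K :: "'a::banach set"
    and m :: nat
    and lam :: "nat \<Rightarrow> 'a \<Rightarrow> real"
    and w :: "nat \<Rightarrow> real"
  assumes "compact K"
    and "\<And>j. j < m \<Longrightarrow> bounded_linear (lam j)"
    and "\<And>j. j < m \<Longrightarrow> onorm (lam j) = 1"
  shows "((\<lambda>\<epsilon>. cheb_radius (fiber_nbhd K m lam w \<epsilon>))
           \<longlongrightarrow> cheb_radius (fiber K m lam w)) (at_right 0)"
proof -
  define g where "g = (\<lambda>f. mnorm m (\<lambda>j. lam j f - w j))"
  define F where "F = fiber K m lam w"
  have N: "fiber_nbhd K m lam w e = {f\<in>K. g f \<le> e}" for e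
    unfolding g_def by (rule nbhd_eq)
  have g0: "g f \<ge> 0" for f unfolding g_def mnorm_def by (simp add: sum_nonneg)
  have FK: "F \<subseteq> K" unfolding F_def fiber_def by auto
  have cont: "continuous_on K g"
  proof -
    have "\<forall>j\<in>{..<m}. continuous_on K (\<lambda>f. \<bar>lam j f - w j\<bar>^2)"
    proof
      fix j assume "j \<in> {..<m}"
      then have "continuous_on K (lam j)"
        using assms(2) linear_continuous_on by auto
      then show "continuous_on K (\<lambda>f. \<bar>lam j f - w j\<bar>^2)"
        by (intro continuous_intros) auto
    qed
    then have "continuous_on K (\<lambda>f. \<Sum>j<m. \<bar>lam j f - w j\<bar>^2)"
      by (intro continuous_on_sum) auto
    then show ?thesis unfolding g_def mnorm_def by (rule continuous_on_real_sqrt[OF continuous_on_mult[OF continuous_on_const]])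
  qed
  have gF: "f \<in> F" if "f \<in> K" "g f = 0" for f
  proof (cases "m = 0")
    case True then show ?thesis using that unfolding F_def fiber_def by auto
  next
    case False
    have "(1 / real m) * (\<Sum>j<m. \<bar>lam j f - w j\<bar>^2) = 0"
      using that(2) unfolding g_def mnorm_def by simp
    then have "(\<Sum>j<m. \<bar>lam j f - w j\<bar>^2) = 0" using False by simp
    then have "\<forall>j\<in>{..<m}. \<bar>lam j f - w j\<bar>^2 = 0"
      by (subst (asm) sum_nonneg_eq_0_iff) auto
    then show ?thesis using that(1) unfolding F_def fiber_def by auto
  qed
  have key: "\<exists>e0>0. \<forall>e. e < e0 \<longrightarrow> fiber_nbhd K m lam w e \<subseteq> (\<Union>x\<in>F. ball x d)"
    if d: "d > 0" for d
  proof -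
    define C where "C = K - (\<Union>x\<in>F. ball x d)"
    have cC: "compact C" unfolding C_def using assms(1)
      by (intro compact_diff) (auto intro!: open_UN)
    show ?thesis
    proof (cases "C = {}")
      case True
      then show ?thesis using N C_def by (intro exI[of _ 1]) auto
    next
      case False
      have cg: "continuous_on C g" using continuous_on_subset[OF cont] unfolding C_def by blast
      obtain x0 where x0: "x0 \<in> C" "\<forall>y\<in>C. g x0 \<le> g y"
        using continuous_attains_inf[OF cC False cg] by blast
      have "x0 \<notin> F" using x0(1) d unfolding C_def by auto
      then have "g x0 \<noteq> 0" using gF x0(1) unfolding C_def by auto
      then have pos: "g x0 > 0" using g0[of x0] by linarith
      show ?thesis
      proof (intro exI[of _ "g x0"] conjI allI impI pos)
        fix e assume "e < g x0"
        show "fiber_nbhd K m lam w e \<subseteq> (\<Union>x\<in>F. ball x d)"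
        proof
          fix f assume "f \<in> fiber_nbhd K m lam w e"
          then have f: "f \<in> K" "g f \<le> e" using N by auto
          show "f \<in> (\<Union>x\<in>F. ball x d)"
          proof (rule ccontr)
            assume "f \<notin> (\<Union>x\<in>F. ball x d)"
            then have "f \<in> C" using f unfolding C_def by auto
            then have "g x0 \<le> g f" using x0(2) by blast
            then show False using f(2) \<open>e < g x0\<close> by linarith
          qed
        qed
      qed
    qed
  qed
  have FN: "F \<subseteq> fiber_nbhd K m lam w e" if "e \<ge> 0" for e
    unfolding N
  proof
    fix f assume f: "f \<in> F"
    then have "g f = 0" unfolding F_def fiber_def g_def mnorm_def by simp
    then show "f \<in> {f\<in>K. g f \<le> e}" using f FK that by auto
  qed
  have bN: "bounded (fiber_nbhd K m lam w e)" for e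
    unfolding N by (rule bounded_subset[OF compact_imp_bounded[OF assms(1)]]) auto
  have bF: "bounded F" by (rule bounded_subset[OF compact_imp_bounded[OF assms(1)] FK])
  show ?thesis
    unfolding F_def[symmetric]
  proof (rule tendstoI)
    fix d :: real assume d: "d > 0"
    obtain e0 where e0: "e0 > 0" "\<And>e. e < e0 \<Longrightarrow> fiber_nbhd K m lam w e \<subseteq> (\<Union>x\<in>F. ball x (d/2))"
      using key[of "d/2"] d by auto
    show "\<forall>\<^sub>F e in at_right 0. dist (cheb_radius (fiber_nbhd K m lam w e)) (cheb_radius F) < d"
      unfolding eventually_at_right_field
    proof (intro exI[of _ e0] conjI allI impI e0(1))
      fix e :: real assume e: "0 < e" "e < e0"
      show "dist (cheb_radius (fiber_nbhd K m lam w e)) (cheb_radius F) < d"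
      proof (cases "F = {}")
        case True
        then have "fiber_nbhd K m lam w e = F" using e0(2)[OF e(2)] by auto
        then show ?thesis using d by simp
      next
        case False
        have "cheb_radius F \<le> cheb_radius (fiber_nbhd K m lam w e)"
          using cheb_mono[OF False FN bN] e by auto
        moreover have "cheb_radius (fiber_nbhd K m lam w e) \<le> cheb_radius F + d/2"
          using cheb_nbhd[OF False bF _ e0(2)[OF e(2)]] FN[of e] e False by auto
        ultimately show ?thesis using d by (simp add: dist_real_def)
      qed
    qed
  qed
qed

end
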